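(* Let $p$ be prime, let $k\ge 2$ and $\ell\ge 1$ be integers, and let $\ell_{i_1}\le \ell_{i_2}\le\cdots\le\ell_{i_{k-1}}$ be positive integers. For $1\le m\le k-1$ let $y_{i_m}\in F_p[x]$ be given polynomials of degree less than $\ell_{i_m}$, pairwise distinct, and set $L_{i_m}=(\ell_{i_m}-1)(k-1)+\ell$. Let $s_0,s_1\in F_p[x]$ be two distinct polynomials of degree less than $\ell$, and let $z_{i_m}\in F_p[x]$ be given polynomials of degree less than $L_{i_m}$ ($1\le m\le k-1$). For $h\in\{0,1\}$ consider the system of congruences in the unknowns $(r_{h,0},\dots,r_{h,k-2})$, where each $r_{h,j}$ ranges over the polynomials in $F_p[x]$ of degree less than $L_{i_{k-1}}$: $$z_{i_m}\equiv \sum_{j=0}^{k-2} r_{h,j}\,y_{i_m}^{\,j}+s_h\,y_{i_m}^{\,k-1}\pmod{x^{L_{i_m}}},\qquad m=1,\dots,k-1.$$ Then the system for $h=0$ and the system for $h=1$ have the same number of solutions.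
   Context: $F_p[x]$ is the polynomial ring over the finite field $F_p$. Since $L_{i_1}\le\cdots\le L_{i_{k-1}}$, each congruence is well defined for unknowns taken modulo $x^{L_{i_{k-1}}}$. *)

theory Defs
  imports "HOL-Computational_Algebra.Polynomial" "HOL-Computational_Algebra.Primes"
begin

end

theory Submission
  imports Defs
begin

definition PP :: "(nat \<Rightarrow> 'a::field poly) \<Rightarrow> nat \<Rightarrow> 'a poly poly" where
  "PP y n = (\<Prod>m\<in>{1..n}. [:- y m, 1:])"

lemma PP_Suc: "PP y (Suc n) = PP y n * [:- y (Suc n), 1:]"
  unfolding PP_def by (simp add: atLeastAtMostSuc_conv mult.commute)

lemma PP_deg: "degree (PP y n) = n \<and> coeff (PP y n) n = 1"
proof (induction n)
  case 0 then show ?case by (simp add: PP_def)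
next
  case (Suc n)
  have nz: "PP y n \<noteq> 0" using Suc by auto
  have "degree (PP y (Suc n)) = Suc n" unfolding PP_Suc
    using Suc nz by (subst degree_mult_eq) auto
  moreover have "coeff (PP y (Suc n)) (Suc n) = 1"
    using Suc nz calculation unfolding PP_Suc
    by (metis lead_coeff_mult lead_coeff_pCons(1) mult_1_right one_neq_zero pCons_one)
  ultimately show ?case by simp
qed

lemma PP_root: "m \<in> {1..n} \<Longrightarrow> poly (PP y n) (y m) = 0"
  unfolding PP_def by (auto simp: poly_prod intro: prod_zero)

lemma PP_coeff_deg:
  assumes "\<And>m. m \<in> {1..n} \<Longrightarrow> degree (y m) \<le> B"
  shows "degree (coeff (PP y n) j) \<le> n * B"
  using assms
proof (induction n arbitrary: j)
  case 0 then show ?case by (simp add: PP_def coeff_1)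
next
  case (Suc n)
  have IH: "\<And>j. degree (coeff (PP y n) j) \<le> n * B" using Suc by auto
  have yb: "degree (y (Suc n)) \<le> B" using Suc by auto
  have eq: "PP y (Suc n) = smult (- y (Suc n)) (PP y n) + pCons 0 (PP y n)"
    unfolding PP_Suc by (simp add: mult_pCons_right)
  have "coeff (PP y (Suc n)) j = - y (Suc n) * coeff (PP y n) j + coeff (pCons 0 (PP y n)) j"
    unfolding eq by simp
  moreover have "degree (- y (Suc n) * coeff (PP y n) j) \<le> Suc n * B"
    using degree_mult_le[of "- y (Suc n)" "coeff (PP y n) j"] IH[of j] yb by simp
  moreover have "degree (coeff (pCons 0 (PP y n)) j) \<le> Suc n * B"
    using IH by (cases j) (auto intro: le_trans[OF _ le_add2])
  ultimately show ?case
    by (metis degree_add_le)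
qed

lemma PP_sum: "poly (PP y n) x = (\<Sum>j<n. coeff (PP y n) j * x ^ j) + x ^ n"
proof -
  have "poly (PP y n) x = (\<Sum>i\<le>n. coeff (PP y n) i * x ^ i)"
    using PP_deg[of y n] by (simp add: poly_altdef)
  also have "\<dots> = (\<Sum>j<n. coeff (PP y n) j * x ^ j) + x ^ n"
    using PP_deg[of y n] by (simp add: lessThan_Suc_atMost[symmetric])
  finally show ?thesis .
qed

theorem theorem4:
  fixes y z :: "nat \<Rightarrow> 'a :: {field, finite} poly"
    and s :: "nat \<Rightarrow> 'a poly"
    and lens :: "nat \<Rightarrow> nat" and l k :: nat and L :: "nat \<Rightarrow> nat"
  assumes p_prime: "prime (card (UNIV :: 'a set))"
    and k: "k \<ge> 2" and l: "l \<ge> 1"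
    and lens_pos: "\<And>m. m \<in> {1..k-1} \<Longrightarrow> lens m \<ge> 1"
    and lens_sorted: "\<And>m m'. 1 \<le> m \<Longrightarrow> m \<le> m' \<Longrightarrow> m' \<le> k-1 \<Longrightarrow> lens m \<le> lens m'"
    and y_deg: "\<And>m. m \<in> {1..k-1} \<Longrightarrow> degree (y m) < lens m"
    and y_dist: "inj_on y {1..k-1}"
    and L_def: "\<And>m. L m = (lens m - 1) * (k - 1) + l"
    and s_dist: "s 0 \<noteq> s 1"
    and s_deg: "degree (s 0) < l" "degree (s 1) < l"
    and z_deg: "\<And>m. m \<in> {1..k-1} \<Longrightarrow> degree (z m) < L m"
  shows "card {r :: nat \<Rightarrow> 'a poly.
            (\<forall>j. k - 1 \<le> j \<longrightarrow> r j = 0) \<and>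
            (\<forall>j < k - 1. degree (r j) < L (k - 1)) \<and>
            (\<forall>m \<in> {1..k-1}. monom 1 (L m) dvd
               (z m - ((\<Sum>j<k-1. r j * y m ^ j) + s 0 * y m ^ (k - 1))))}
       = card {r :: nat \<Rightarrow> 'a poly.
            (\<forall>j. k - 1 \<le> j \<longrightarrow> r j = 0) \<and>
            (\<forall>j < k - 1. degree (r j) < L (k - 1)) \<and>
            (\<forall>m \<in> {1..k-1}. monom 1 (L m) dvd
               (z m - ((\<Sum>j<k-1. r j * y m ^ j) + s 1 * y m ^ (k - 1))))}"
  proof -
  define n where "n = k - 1"
  define B where "B = lens n - 1"
  define d where "d = s 1 - s 0"
  define r' where "r' = (\<lambda>j. if j < n then - d * coeff (PP y n) j else 0)"
  define A where "A = (\<lambda>h. {r :: nat \<Rightarrow> 'a poly.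
            (\<forall>j. k - 1 \<le> j \<longrightarrow> r j = 0) \<and>
            (\<forall>j < k - 1. degree (r j) < L (k - 1)) \<and>
            (\<forall>m \<in> {1..k-1}. monom 1 (L m) dvd
               (z m - ((\<Sum>j<k-1. r j * y m ^ j) + s h * y m ^ (k - 1))))})"
  have yB: "degree (y m) \<le> B" if "m \<in> {1..n}" for m
  proof -
    have "lens m \<le> lens n" using lens_sorted[of m n] that n_def by auto
    thus ?thesis using y_deg[of m] that n_def B_def by auto
  qed
  have dd: "degree d < l" unfolding d_def using s_deg degree_diff_le_max[of "s 1" "s 0"] by auto
  have r'deg: "degree (r' j) < L n" for j
  proof (cases "j < n")
    case True
    have "degree (r' j) \<le> degree (-d) + degree (coeff (PP y n) j)"
      using True unfolding r'_def by (simp add: degree_mult_le)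
    also have "\<dots> \<le> degree d + n * B" using PP_coeff_deg[of n y B, OF yB] by simp
    finally show ?thesis using dd L_def[of n] B_def n_def by (simp add: mult.commute)
  next
    case False then show ?thesis using L_def[of n] l unfolding r'_def by simp
  qed
  have key: "(\<Sum>j<n. r' j * y m ^ j) = d * y m ^ n" if "m \<in> {1..n}" for m
  proof -
    have "(\<Sum>j<n. r' j * y m ^ j) = - d * (\<Sum>j<n. coeff (PP y n) j * y m ^ j)"
      unfolding r'_def by (simp add: sum_distrib_left mult.assoc)
    also have "(\<Sum>j<n. coeff (PP y n) j * y m ^ j) = - (y m ^ n)"
      using PP_sum[of y n "y m"] PP_root[OF that, of y] by (simp add: eq_neg_iff_add_eq_0)
    finally show ?thesis by simp
  qed
  have eqn: "(\<Sum>j<n. (r j + r' j) * y m ^ j) + s 0 * y m ^ n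
      = (\<Sum>j<n. r j * y m ^ j) + s 1 * y m ^ n" if "m \<in> {1..n}" for m r
  proof -
    have "(\<Sum>j<n. (r j + r' j) * y m ^ j) = (\<Sum>j<n. r j * y m ^ j) + (\<Sum>j<n. r' j * y m ^ j)"
      by (simp add: distrib_right sum.distrib)
    thus ?thesis using key[OF that] unfolding d_def by (simp add: algebra_simps)
  qed
  have "bij_betw (\<lambda>r j. r j + r' j) (A 1) (A 0)"
  proof (rule bij_betw_byWitness[where f' = "\<lambda>r j. r j - r' j"])
    show "\<forall>a\<in>A 1. (\<lambda>j. (a j + r' j) - r' j) = a" by simp
    show "\<forall>a\<in>A 0. (\<lambda>j. (a j - r' j) + r' j) = a" by simp
    show "(\<lambda>r j. r j + r' j) ` A 1 \<subseteq> A 0"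
    proof
      fix x assume "x \<in> (\<lambda>r j. r j + r' j) ` A 1"
      then obtain r where r: "r \<in> A 1" and x: "x = (\<lambda>j. r j + r' j)" by auto
      have "\<forall>j. k - 1 \<le> j \<longrightarrow> x j = 0" using r unfolding A_def x r'_def n_def by auto
      moreover have "\<forall>j < k - 1. degree (x j) < L (k - 1)"
        using r r'deg unfolding A_def x n_def
        by (auto intro: le_less_trans[OF degree_add_le_max] simp: n_def)
      moreover have "\<forall>m \<in> {1..k-1}. monom 1 (L m) dvd
               (z m - ((\<Sum>j<k-1. x j * y m ^ j) + s 0 * y m ^ (k - 1)))"
        using r eqn unfolding A_def x n_def by auto
      ultimately show "x \<in> A 0" unfolding A_def by blast
    qed
    show "(\<lambda>r j. r j - r' j) ` A 0 \<subseteq> A 1"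
    proof
      fix x assume "x \<in> (\<lambda>r j. r j - r' j) ` A 0"
      then obtain r where r: "r \<in> A 0" and x: "x = (\<lambda>j. r j - r' j)" by auto
      have "\<forall>j. k - 1 \<le> j \<longrightarrow> x j = 0" using r unfolding A_def x r'_def n_def by auto
      moreover have "\<forall>j < k - 1. degree (x j) < L (k - 1)"
        using r r'deg unfolding A_def x n_def
        by (auto intro: le_less_trans[OF degree_diff_le_max] simp: n_def)
      moreover have "\<forall>m \<in> {1..k-1}. monom 1 (L m) dvd
               (z m - ((\<Sum>j<k-1. x j * y m ^ j) + s 1 * y m ^ (k - 1)))"
      proof
        fix m assume m: "m \<in> {1..k-1}"
        have "(\<Sum>j<n. x j * y m ^ j) + s 1 * y m ^ n = (\<Sum>j<n. r j * y m ^ j) + s 0 * y m ^ n"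
          using eqn[of m x] m unfolding x n_def by simp
        thus "monom 1 (L m) dvd (z m - ((\<Sum>j<k-1. x j * y m ^ j) + s 1 * y m ^ (k - 1)))"
          using r m unfolding A_def n_def by auto
      qed
      ultimately show "x \<in> A 1" unfolding A_def by blast
    qed
  qed
  hence "card (A 1) = card (A 0)" by (rule bij_betw_same_card)
  thus ?thesis unfolding A_def by simp
qed

end
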